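(* Let $x \in \mathcal{X}_f$ be arbitrary and $\mathcal{A}(x)$ the corresponding active set. Assume the matrix $G^{\mathcal{A}}$ has full row rank and let $(G^{\mathcal{A}})^{\prime}=\begin{bmatrix} E & J \end{bmatrix} \begin{bmatrix} F \\ 0\end{bmatrix}$ be a QR factorization of $(G^{\mathcal{A}})^{\prime}$. Let $K_{\epsilon}=E \Theta S^{\mathcal{A}}- J \Psi J^{\prime} \hat{H} E \Theta S^{\mathcal{A}}$, $b_{\epsilon}=(E-J \Psi J^{\prime} \hat{H} E) \Theta W^{\mathcal{A}} - J \Psi J^{\prime} c$, $K_{\lambda}=-\Theta^{\prime} E^{\prime} (\hat{H} K_{\epsilon})$, $b_{\lambda}=-\Theta^{\prime} E^{\prime} (\hat{H} b_{\epsilon}+c)$, where $\Psi=(J^{\prime}\hat{H}J)^{-1}$ and $\Theta=(G^{\mathcal{A}}E)^{-1}$ exist by construction. Then $\epsilon^\star(x)=K_{\epsilon}x+b_{\epsilon}$ is the affine optimizer and $\lambda^{\star \mathcal{A}}(x)=K_{\lambda}x+b_{\lambda}$ are the corresponding affine active Lagrange multipliers on the polytope $\mathcal{P}=\{x \in \mathbb{R}^n \mid Tx \leq d\}$ with $T=\begin{pmatrix} G^{\mathcal{I}} K_\epsilon-S^{\mathcal{I}} \\ -K_{\lambda}\end{pmatrix}$ and $d=\begin{pmatrix} W^{\mathcal{I}} -G^{\mathcal{I}} b_{\epsilon} \\ b_{\lambda}\end{pmatrix}$.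
   Context: Consider the linear system $x(k+1)=Ax(k)+Bu(k)+Dw(k)$ with $x\in\mathbb{R}^n$, $u\in\mathbb{R}^m$, $w\in\mathbb{R}^s$, compact polyhedral constraints $x\in\mathcal{X}$, $u\in\mathcal{U}$, $w\in\mathcal{D}$ containing the origin in their interior, and input $u(k)=-K_\infty x(k)+v(k)$ with LQR gain $K_\infty$ and correction input $v$. A min-max MPC problem over horizon $N$ (worst case over disturbance sequences) is reformulated as the QP $\min_{Z,\gamma} \frac12 Z'HZ+\gamma$ s.t. $G_{\mathrm m}Z+g_{\mathrm m}\gamma\le W_{\mathrm m}+S_{\mathrm m}x$, $G_{\mathrm c}Z\le W_{\mathrm c}+S_{\mathrm c}x$, with $H\succ 0$, $Z\in\mathbb{R}^{mN}$, $\gamma\in\mathbb{R}$, $Z=V+H^{-1}L'x$ where $V$ is the correction input sequence; this QP has a unique optimizer. With $\epsilon=[Z',\gamma]'$ it is written as $\min_\epsilon \frac12\epsilon'\hat H\epsilon+c'\epsilon$ s.t. $G\epsilon\le W+Sx$, where $\hat H=\begin{pmatrix}H&0\\0&0\end{pmatrix}$ (singular), $c'=(0,\dots,0,1)$, $G\in\mathbb{R}^{(l+r)\times(mN+1)}$, $W\in\mathbb{R}^{l+r}$, $S\in\mathbb{R}^{(l+r)\times n}$. $\mathcal{X}_f$ is the set of states for which the problem is feasible; $\epsilon^\star(x)$, $\lambda^\star(x)$ are the optimizer and Lagrange multipliers. Active set $\mathcal{A}(x)=\{i \mid G^i\epsilon^\star(x)-W^i-S^ix=0\}$, inactive set $\mathcal{I}(x)=\{i\mid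 G^i\epsilon^\star(x)-W^i-S^ix<0\}$. For a matrix $M$, $M^{\mathcal{L}}$ denotes the submatrix of rows indexed by $\mathcal{L}$. *)

theory Defs
  imports "Jordan_Normal_Form.DL_Rank_Submatrix" "Jordan_Normal_Form.Gauss_Jordan_Elimination"
begin

definition posdef_mat :: "real mat \<Rightarrow> bool" where
  "posdef_mat M \<longleftrightarrow> M \<in> carrier_mat (dim_row M) (dim_row M) \<and> transpose_mat M = M \<and>
     (\<forall>v \<in> carrier_vec (dim_row M). v \<noteq> 0\<^sub>v (dim_row M) \<longrightarrow> v \<bullet> (M *\<^sub>v v) > 0)"

definition row_sub :: "'a mat \<Rightarrow> nat set \<Rightarrow> 'a mat" where
  "row_sub M L = submatrix M L UNIV"

definition vec_sub :: "'a vec \<Rightarrow> nat set \<Rightarrow> 'a vec" where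
  "vec_sub v L = vec (card {i. i < dim_vec v \<and> i \<in> L}) (\<lambda>i. v $ pick L i)"

definition append_cols :: "'a :: zero mat \<Rightarrow> 'a mat \<Rightarrow> 'a mat" where
  "append_cols E J = four_block_mat E J (0\<^sub>m 0 (dim_col E)) (0\<^sub>m 0 (dim_col J))"

definition qp_feasible :: "real mat \<Rightarrow> real vec \<Rightarrow> real mat \<Rightarrow> real vec \<Rightarrow> real vec \<Rightarrow> bool" where
  "qp_feasible G W S x eps \<longleftrightarrow> eps \<in> carrier_vec (dim_col G) \<and> G *\<^sub>v eps \<le> W + S *\<^sub>v x"

definition qp_cost :: "real mat \<Rightarrow> real vec \<Rightarrow> real vec \<Rightarrow> real" where
  "qp_cost Hh c eps = 1/2 * (eps \<bullet> (Hh *\<^sub>v eps)) + c \<bullet> eps"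

definition qp_optimizer ::
  "real mat \<Rightarrow> real vec \<Rightarrow> real mat \<Rightarrow> real vec \<Rightarrow> real mat \<Rightarrow> real vec \<Rightarrow> real vec \<Rightarrow> bool" where
  "qp_optimizer Hh c G W S x eps \<longleftrightarrow> qp_feasible G W S x eps \<and>
     (\<forall>eps'. qp_feasible G W S x eps' \<longrightarrow> qp_cost Hh c eps \<le> qp_cost Hh c eps')"

definition feasible_states :: "real mat \<Rightarrow> real vec \<Rightarrow> real mat \<Rightarrow> real vec set" where
  "feasible_states G W S = {x \<in> carrier_vec (dim_col S). \<exists>eps. qp_feasible G W S x eps}"

definition eps_star ::
  "real mat \<Rightarrow> real vec \<Rightarrow> real mat \<Rightarrow> real vec \<Rightarrow> real mat \<Rightarrow> real vec \<Rightarrow> real vec" where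
  "eps_star Hh c G W S x = (THE eps. qp_optimizer Hh c G W S x eps)"

definition active_set :: "real mat \<Rightarrow> real vec \<Rightarrow> real mat \<Rightarrow> real vec \<Rightarrow> real vec \<Rightarrow> nat set" where
  "active_set G W S x eps = {i. i < dim_row G \<and> row G i \<bullet> eps - W $ i - row S i \<bullet> x = 0}"

definition inactive_set :: "real mat \<Rightarrow> real vec \<Rightarrow> real mat \<Rightarrow> real vec \<Rightarrow> real vec \<Rightarrow> nat set" where
  "inactive_set G W S x eps = {i. i < dim_row G \<and> row G i \<bullet> eps - W $ i - row S i \<bullet> x < 0}"

definition lagrange_multipliers ::
  "real mat \<Rightarrow> real vec \<Rightarrow> real mat \<Rightarrow> real vec \<Rightarrow> real mat \<Rightarrow> real vec \<Rightarrow> real vec \<Rightarrow> real vec \<Rightarrow> bool" where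
  "lagrange_multipliers Hh c G W S x eps lam \<longleftrightarrow>
     lam \<in> carrier_vec (dim_row G) \<and> lam \<ge> 0\<^sub>v (dim_row G) \<and>
     Hh *\<^sub>v eps + c + transpose_mat G *\<^sub>v lam = 0\<^sub>v (dim_col G) \<and>
     (\<forall>i < dim_row G. lam $ i * (row G i \<bullet> eps - W $ i - row S i \<bullet> x) = 0)"

end

theory Submission
  imports Defs
begin

lemma mv_assoc: "dim_col A = dim_row B \<Longrightarrow> dim_col B = dim_vec v \<Longrightarrow> (A * B) *\<^sub>v v = A *\<^sub>v (B *\<^sub>v v)"
  by (rule assoc_mult_mat_vec[of A "dim_row A" "dim_col A" B "dim_col B" v]) (auto intro!: carrier_matI carrier_vecI)

lemma mv_minus: "dim_row A = dim_row B \<Longrightarrow> dim_col A = dim_col B \<Longrightarrow> dim_col A = dim_vec v \<Longrightarrow>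
   ((A :: 'a :: ring mat) - B) *\<^sub>v v = A *\<^sub>v v - B *\<^sub>v v"
  by (rule minus_mult_distrib_mat_vec[of A "dim_row A" "dim_col A"]) (auto intro!: carrier_matI carrier_vecI)

lemma mv_plus: "dim_row A = dim_row B \<Longrightarrow> dim_col A = dim_col B \<Longrightarrow> dim_col A = dim_vec v \<Longrightarrow>
   ((A :: 'a :: semiring_0 mat) + B) *\<^sub>v v = A *\<^sub>v v + B *\<^sub>v v"
  by (rule add_mult_distrib_mat_vec[of A "dim_row A" "dim_col A"]) (auto intro!: carrier_matI carrier_vecI)

lemma mv_vplus: "dim_vec v = dim_vec w \<Longrightarrow> dim_col A = dim_vec v \<Longrightarrow>
   (A :: 'a :: semiring_0 mat) *\<^sub>v (v + w) = A *\<^sub>v v + A *\<^sub>v w"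
  by (rule mult_add_distrib_mat_vec[of A "dim_row A" "dim_col A"]) (auto intro!: carrier_matI carrier_vecI)

lemma mv_vminus: "dim_vec v = dim_vec w \<Longrightarrow> dim_col A = dim_vec v \<Longrightarrow>
   (A :: 'a :: ring mat) *\<^sub>v (v - w) = A *\<^sub>v v - A *\<^sub>v w"
  by (rule mult_minus_distrib_mat_vec[of A "dim_row A" "dim_col A"]) (auto intro!: carrier_matI carrier_vecI)

lemma mv_uminus: "dim_col A = dim_vec v \<Longrightarrow> (- (A :: 'a :: ring mat)) *\<^sub>v v = - (A *\<^sub>v v)"
  by (intro eq_vecI) (auto simp: scalar_prod_def sum_negf)

lemma mv_vuminus: "dim_col A = dim_vec v \<Longrightarrow> (A :: 'a :: ring mat) *\<^sub>v (- v) = - (A *\<^sub>v v)"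
  by (intro eq_vecI) (auto simp: scalar_prod_def sum_negf)

lemmas mv_simps = mv_assoc mv_minus mv_plus mv_vplus mv_vminus mv_uminus mv_vuminus

lemma (in vec_space) rank_mult_le:
  assumes A: "A \<in> carrier_mat n k" and B: "B \<in> carrier_mat k m"
  shows "rank (A * B) \<le> rank A"
proof -
  define W1 where "W1 = span (set (cols A))"
  have AB: "A * B \<in> carrier_mat n m" using A B by simp
  have cA: "set (cols A) \<subseteq> carrier_vec n" using cols_dim A by (metis carrier_matD(1))
  have cAB: "set (cols (A * B)) \<subseteq> carrier_vec n" using cols_dim AB by (metis carrier_matD(1))
  have sub: "set (cols (A * B)) \<subseteq> W1"
  proof
    fix x assume "x \<in> set (cols (A * B))"
    then obtain i where i: "i < m" "x = col (A * B) i" using AB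
      unfolding in_set_conv_nth by auto
    then have "x = A *\<^sub>v col B i" by (simp only: i(2) col_mult2[OF A B i(1)])
    then show "x \<in> W1" unfolding W1_def using col_space_eq[OF A] A B i
      unfolding col_space_def by auto
  qed
  have sW1: "VectorSpace.subspace class_ring W1 V"
    unfolding W1_def by (rule span_is_subspace[OF cA])
  have sAB: "VectorSpace.subspace class_ring (span (set (cols (A * B)))) V"
    by (rule span_is_subspace[OF cAB])
  have "span (set (cols (A * B))) \<subseteq> W1"
    unfolding W1_def by (rule span_is_subset[OF sub[unfolded W1_def] span_is_submodule[OF cA]])
  then have subspace: "VectorSpace.subspace class_ring (span (set (cols (A * B)))) (vs W1)"
    using nested_subspaces[OF sW1 sAB] by blast
  have fin: "vectorspace.fin_dim class_ring (vs W1)" using W1_def A fin_dim_span_cols by blast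
  show ?thesis unfolding rank_def W1_def[symmetric]
    using vectorspace.subspace_dim[OF subspace_is_vs[OF sW1] subspace fin] fin_dim_span_cols[OF AB] by simp
qed

lemma kkt_alg:
  fixes E J Hh GA Th Ps F SA :: "real mat" and WA x c :: "real vec"
  assumes E: "E \<in> carrier_mat p a" and J: "J \<in> carrier_mat p q" and Hh: "Hh \<in> carrier_mat p p"
    and GA: "GA \<in> carrier_mat a p" and Th: "Th \<in> carrier_mat a a" and Ps: "Ps \<in> carrier_mat q q"
    and F: "F \<in> carrier_mat a a" and SA: "SA \<in> carrier_mat a n" and WA: "WA \<in> carrier_vec a"
    and x: "x \<in> carrier_vec n" and c: "c \<in> carrier_vec p"
    and GAETh: "GA * E * Th = 1\<^sub>m a" and GAJ: "GA * J = 0\<^sub>m a q"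
    and Psi: "transpose_mat J * Hh * J * Ps = 1\<^sub>m q"
    and EEJJ: "E * transpose_mat E + J * transpose_mat J = 1\<^sub>m p"
    and GAt: "transpose_mat GA = E * F" and FTh: "F * transpose_mat Th = 1\<^sub>m a"
  assumes Keps_def: "Keps = E * Th * SA - J * Ps * transpose_mat J * Hh * E * Th * SA"
    and beps_def: "beps = (E - J * Ps * transpose_mat J * Hh * E) * Th *\<^sub>v WA - J * Ps * transpose_mat J *\<^sub>v c"
    and Klam_def: "Klam = - (transpose_mat Th * transpose_mat E * (Hh * Keps))"
    and blam_def: "blam = - (transpose_mat Th * transpose_mat E *\<^sub>v (Hh *\<^sub>v beps + c))"
  shows "GA *\<^sub>v (Keps *\<^sub>v x + beps) = SA *\<^sub>v x + WA"
    and "Hh *\<^sub>v (Keps *\<^sub>v x + beps) + c + transpose_mat GA *\<^sub>v (Klam *\<^sub>v x + blam) = 0\<^sub>v p"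
    and "Klam *\<^sub>v x + blam = - (transpose_mat Th *\<^sub>v (transpose_mat E *\<^sub>v (Hh *\<^sub>v (Keps *\<^sub>v x + beps) + c)))"
proof -
  note dims = carrier_matD[OF E] carrier_matD[OF J] carrier_matD[OF Hh] carrier_matD[OF GA]
    carrier_matD[OF Th] carrier_matD[OF Ps] carrier_matD[OF F] carrier_matD[OF SA]
    carrier_vecD[OF WA] carrier_vecD[OF x] carrier_vecD[OF c]
  define u where "u = SA *\<^sub>v x + WA"
  define y where "y = Th *\<^sub>v u"
  define z1 where "z1 = Ps *\<^sub>v (transpose_mat J *\<^sub>v (Hh *\<^sub>v (E *\<^sub>v y)))"
  define z2 where "z2 = Ps *\<^sub>v (transpose_mat J *\<^sub>v c)"
  define eps where "eps = Keps *\<^sub>v x + beps"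
  have u: "u \<in> carrier_vec a" unfolding u_def using SA x WA by simp
  have y: "y \<in> carrier_vec a" unfolding y_def using Th u by simp
  have z1: "z1 \<in> carrier_vec q" unfolding z1_def using Ps J Hh E y by simp
  have z2: "z2 \<in> carrier_vec q" unfolding z2_def using Ps J c by simp
  note ldims = carrier_vecD[OF u] carrier_vecD[OF y] carrier_vecD[OF z1] carrier_vecD[OF z2]
  have Jt: "transpose_mat J \<in> carrier_mat q p" using J by simp
  have Et: "transpose_mat E \<in> carrier_mat a p" using E by simp
  have Tht: "transpose_mat Th \<in> carrier_mat a a" using Th by simp
  have SAx: "SA *\<^sub>v x \<in> carrier_vec a" using SA x by simp
  have ThSAx: "Th *\<^sub>v (SA *\<^sub>v x) \<in> carrier_vec a" using SA x Th by simp
  have ThWA: "Th *\<^sub>v WA \<in> carrier_vec a" using WA Th by simp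
  have K1: "Keps *\<^sub>v x = E *\<^sub>v (Th *\<^sub>v (SA *\<^sub>v x)) - J *\<^sub>v (Ps *\<^sub>v (transpose_mat J *\<^sub>v (Hh *\<^sub>v (E *\<^sub>v (Th *\<^sub>v (SA *\<^sub>v x))))))"
    unfolding Keps_def by (simp add: mv_simps dims ldims)
  have b1: "beps = E *\<^sub>v (Th *\<^sub>v WA) - J *\<^sub>v (Ps *\<^sub>v (transpose_mat J *\<^sub>v (Hh *\<^sub>v (E *\<^sub>v (Th *\<^sub>v WA))))) - J *\<^sub>v z2"
    unfolding beps_def z2_def by (simp add: mv_simps dims ldims)
  have eps: "eps = E *\<^sub>v y - J *\<^sub>v z1 - J *\<^sub>v z2"
  proof -
    have yy: "y = Th *\<^sub>v (SA *\<^sub>v x) + Th *\<^sub>v WA" unfolding y_def u_def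
      using Th SAx WA by (simp add: mult_add_distrib_mat_vec)
    have Ey: "E *\<^sub>v y = E *\<^sub>v (Th *\<^sub>v (SA *\<^sub>v x)) + E *\<^sub>v (Th *\<^sub>v WA)"
      unfolding yy using E ThSAx ThWA by (simp add: mult_add_distrib_mat_vec)
    have z1e: "z1 = Ps *\<^sub>v (transpose_mat J *\<^sub>v (Hh *\<^sub>v (E *\<^sub>v (Th *\<^sub>v (SA *\<^sub>v x))))) 
        + Ps *\<^sub>v (transpose_mat J *\<^sub>v (Hh *\<^sub>v (E *\<^sub>v (Th *\<^sub>v WA))))"
      unfolding z1_def Ey using E ThSAx ThWA Hh Jt Ps by (simp add: mult_add_distrib_mat_vec)
    have Jz1: "J *\<^sub>v z1 = J *\<^sub>v (Ps *\<^sub>v (transpose_mat J *\<^sub>v (Hh *\<^sub>v (E *\<^sub>v (Th *\<^sub>v (SA *\<^sub>v x))))))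
        + J *\<^sub>v (Ps *\<^sub>v (transpose_mat J *\<^sub>v (Hh *\<^sub>v (E *\<^sub>v (Th *\<^sub>v WA)))))"
      unfolding z1e using E ThSAx ThWA Hh Jt Ps J by (simp add: mult_add_distrib_mat_vec)
    show ?thesis unfolding eps_def K1 b1 Ey Jz1
      by (rule eq_vecI, insert E ThSAx ThWA Hh Jt Ps J z2, auto)
  qed
  have epsc: "eps \<in> carrier_vec p" unfolding eps using E J y z1 z2 by simp
  show g1: "GA *\<^sub>v (Keps *\<^sub>v x + beps) = SA *\<^sub>v x + WA"
  proof -
    have "GA *\<^sub>v eps = GA *\<^sub>v (E *\<^sub>v y) - GA *\<^sub>v (J *\<^sub>v z1) - GA *\<^sub>v (J *\<^sub>v z2)"
      unfolding eps using GA E J y z1 z2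
      by (simp add: mult_minus_distrib_mat_vec[of _ a p])
    also have "\<dots> = (GA * E * Th) *\<^sub>v u - (GA * J) *\<^sub>v z1 - (GA * J) *\<^sub>v z2"
      unfolding y_def by (simp add: mv_simps dims ldims)
    also have "\<dots> = u" unfolding GAETh GAJ using u z1 z2 by (intro eq_vecI, auto)
    finally show ?thesis unfolding eps_def u_def .
  qed
  define v where "v = Hh *\<^sub>v eps + c"
  have vc: "v \<in> carrier_vec p" unfolding v_def using Hh epsc c by simp
  have Jv: "transpose_mat J *\<^sub>v v = 0\<^sub>v q"
  proof -
    have "transpose_mat J *\<^sub>v v = transpose_mat J *\<^sub>v (Hh *\<^sub>v (E *\<^sub>v y)) - transpose_mat J *\<^sub>v (Hh *\<^sub>v (J *\<^sub>v z1))
        - transpose_mat J *\<^sub>v (Hh *\<^sub>v (J *\<^sub>v z2)) + transpose_mat J *\<^sub>v c"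
      unfolding v_def eps using E J y z1 z2 Hh Jt c
      by (simp add: mult_minus_distrib_mat_vec[of _ p p] mult_minus_distrib_mat_vec[of _ q p]
          mult_add_distrib_mat_vec[of _ q p])
    also have "transpose_mat J *\<^sub>v (Hh *\<^sub>v (J *\<^sub>v z1)) = (transpose_mat J * Hh * J * Ps) *\<^sub>v (transpose_mat J *\<^sub>v (Hh *\<^sub>v (E *\<^sub>v y)))"
      unfolding z1_def by (simp add: mv_simps dims ldims carrier_vecD[OF y])
    also have "transpose_mat J *\<^sub>v (Hh *\<^sub>v (J *\<^sub>v z2)) = (transpose_mat J * Hh * J * Ps) *\<^sub>v (transpose_mat J *\<^sub>v c)"
      unfolding z2_def by (simp add: mv_simps dims ldims)
    finally show ?thesis unfolding Psi using E J y Hh Jt c by (intro eq_vecI, auto)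
  qed
  have lam: "Klam *\<^sub>v x + blam = - (transpose_mat Th *\<^sub>v (transpose_mat E *\<^sub>v v))"
  proof -
    have "Klam *\<^sub>v x = - (transpose_mat Th *\<^sub>v (transpose_mat E *\<^sub>v (Hh *\<^sub>v (Keps *\<^sub>v x))))"
      unfolding Klam_def by (simp add: mv_simps dims ldims Keps_def)
    moreover have "blam = - (transpose_mat Th *\<^sub>v (transpose_mat E *\<^sub>v (Hh *\<^sub>v beps + c)))"
      unfolding blam_def by (simp add: mv_simps dims ldims beps_def)
    moreover have e3: "Hh *\<^sub>v eps + c = Hh *\<^sub>v (Keps *\<^sub>v x) + (Hh *\<^sub>v beps + c)"
    proof -
      have "Hh *\<^sub>v eps = Hh *\<^sub>v (Keps *\<^sub>v x) + Hh *\<^sub>v beps"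
        unfolding eps_def by (rule mv_vplus, auto simp: dims Keps_def beps_def)
      then show ?thesis by (intro eq_vecI, auto simp: dims c)
    qed
    moreover have "transpose_mat Th *\<^sub>v (transpose_mat E *\<^sub>v v) = transpose_mat Th *\<^sub>v (transpose_mat E *\<^sub>v (Hh *\<^sub>v (Keps *\<^sub>v x)))
       + transpose_mat Th *\<^sub>v (transpose_mat E *\<^sub>v (Hh *\<^sub>v beps + c))"
      unfolding v_def e3 by (simp add: mv_simps dims ldims Keps_def beps_def)
    ultimately show ?thesis by (intro eq_vecI, auto simp: dims Keps_def beps_def)
  qed
  show "Klam *\<^sub>v x + blam = - (transpose_mat Th *\<^sub>v (transpose_mat E *\<^sub>v (Hh *\<^sub>v (Keps *\<^sub>v x + beps) + c)))"
    using lam unfolding v_def eps_def .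
  show "Hh *\<^sub>v (Keps *\<^sub>v x + beps) + c + transpose_mat GA *\<^sub>v (Klam *\<^sub>v x + blam) = 0\<^sub>v p"
  proof -
    have "transpose_mat GA *\<^sub>v (Klam *\<^sub>v x + blam) = - ((E * (F * transpose_mat Th)) *\<^sub>v (transpose_mat E *\<^sub>v v))"
      unfolding lam GAt by (simp add: mv_simps dims ldims carrier_vecD[OF vc])
    also have "\<dots> = - (E *\<^sub>v (transpose_mat E *\<^sub>v v))" 
    proof -
      have "F *\<^sub>v (transpose_mat Th *\<^sub>v (transpose_mat E *\<^sub>v v)) = (F * transpose_mat Th) *\<^sub>v (transpose_mat E *\<^sub>v v)"
        by (simp add: mv_simps dims ldims carrier_vecD[OF vc])
      also have "\<dots> = transpose_mat E *\<^sub>v v" unfolding FTh using E vc by simp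
      finally show ?thesis by (simp add: mv_simps dims ldims carrier_vecD[OF vc])
    qed
    finally have 1: "transpose_mat GA *\<^sub>v (Klam *\<^sub>v x + blam) = - (E *\<^sub>v (transpose_mat E *\<^sub>v v))" .
    have "v = (E * transpose_mat E + J * transpose_mat J) *\<^sub>v v" unfolding EEJJ using vc by simp
    also have "\<dots> = E *\<^sub>v (transpose_mat E *\<^sub>v v) + J *\<^sub>v (transpose_mat J *\<^sub>v v)"
      using E J Et Jt vc by (simp add: add_mult_distrib_mat_vec[of _ p p])
    also have "\<dots> = E *\<^sub>v (transpose_mat E *\<^sub>v v)" unfolding Jv using E J Et vc by (intro eq_vecI, auto)
    finally have 2: "v = E *\<^sub>v (transpose_mat E *\<^sub>v v)" .
    show ?thesis unfolding 1 eps_def[symmetric] v_def[symmetric] using vc E Et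
      by (subst (1) 2, intro eq_vecI, auto)
  qed
qed

lemma kkt_opt:
  fixes Hh G S :: "real mat" and c W x eps lam :: "real vec"
  assumes Hh: "Hh \<in> carrier_mat p p" and G: "G \<in> carrier_mat L p" and c: "c \<in> carrier_vec p"
    and W: "W \<in> carrier_vec L" and S: "S \<in> carrier_mat L n" and x: "x \<in> carrier_vec n"
    and sym: "transpose_mat Hh = Hh" and psd: "\<forall>v\<in>carrier_vec p. v \<bullet> (Hh *\<^sub>v v) \<ge> 0"
    and feas: "qp_feasible G W S x eps" and lm: "lagrange_multipliers Hh c G W S x eps lam"
  shows "qp_optimizer Hh c G W S x eps"
  unfolding qp_optimizer_def
proof (intro conjI allI impI feas)
  fix e' assume fe': "qp_feasible G W S x e'"
  have eps: "eps \<in> carrier_vec p" and e': "e' \<in> carrier_vec p" using feas fe' G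
    unfolding qp_feasible_def by auto
  have lamc: "lam \<in> carrier_vec L" and lam0: "lam \<ge> 0\<^sub>v L" 
    and stat: "Hh *\<^sub>v eps + c + transpose_mat G *\<^sub>v lam = 0\<^sub>v p"
    and comp: "\<forall>i<L. lam $ i * (row G i \<bullet> eps - W $ i - row S i \<bullet> x) = 0"
    using lm G unfolding lagrange_multipliers_def by auto
  define b where "b = W + S *\<^sub>v x"
  have bc: "b \<in> carrier_vec L" unfolding b_def using W S x by simp
  define d where "d = e' - eps"
  have dc: "d \<in> carrier_vec p" unfolding d_def using e' eps by simp
  have e'd: "e' = eps + d" unfolding d_def using e' eps by (intro eq_vecI, auto)
  have Ge': "G *\<^sub>v e' \<le> b" using fe' unfolding qp_feasible_def b_def by auto
  have l1: "lam \<bullet> (G *\<^sub>v e') \<le> lam \<bullet> b"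
    unfolding scalar_prod_def using Ge' lam0 bc lamc G
    by (auto intro!: sum_mono mult_left_mono simp: less_eq_vec_def)
  have l2: "lam \<bullet> (G *\<^sub>v eps) = lam \<bullet> b"
    unfolding scalar_prod_def using comp bc lamc G W S x
    by (auto intro!: sum.cong simp: b_def algebra_simps)
  have Hsym: "u \<bullet> (Hh *\<^sub>v w) = w \<bullet> (Hh *\<^sub>v u)" if "u \<in> carrier_vec p" "w \<in> carrier_vec p" for u w
  proof -
    have "u \<bullet> (Hh *\<^sub>v w) = (transpose_mat Hh *\<^sub>v u) \<bullet> w"
      using transpose_vec_mult_scalar[OF Hh that(2) that(1)] by simp
    also have "\<dots> = w \<bullet> (Hh *\<^sub>v u)" unfolding sym using that Hh by (simp add: comm_scalar_prod[of _ p])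
    finally show ?thesis .
  qed
  have Heps: "Hh *\<^sub>v eps = - c - transpose_mat G *\<^sub>v lam"
  proof (rule eq_vecI)
    fix i assume i: "i < dim_vec (- c - transpose_mat G *\<^sub>v lam)"
    then have ip: "i < p" using c G by simp
    have "(Hh *\<^sub>v eps + c + transpose_mat G *\<^sub>v lam) $ i = (0\<^sub>v p) $ i" using stat by simp
    then show "(Hh *\<^sub>v eps) $ i = (- c - transpose_mat G *\<^sub>v lam) $ i" using ip c Hh G by simp
  qed (insert Hh c G, auto)
  have GtL: "transpose_mat G *\<^sub>v lam \<in> carrier_vec p" using G lamc by simp
  have "d \<bullet> (Hh *\<^sub>v eps) = d \<bullet> (- c) - d \<bullet> (transpose_mat G *\<^sub>v lam)"
    unfolding Heps by (rule scalar_prod_minus_distrib[OF dc _ GtL], insert c, auto)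
  also have "d \<bullet> (transpose_mat G *\<^sub>v lam) = lam \<bullet> (G *\<^sub>v d)"
    using transpose_vec_mult_scalar[OF G dc lamc] comm_scalar_prod[OF dc GtL] by simp
  also have "G *\<^sub>v d = G *\<^sub>v e' - G *\<^sub>v eps" unfolding d_def using G e' eps
    by (simp add: mult_minus_distrib_mat_vec)
  also have "lam \<bullet> (G *\<^sub>v e' - G *\<^sub>v eps) = lam \<bullet> (G *\<^sub>v e') - lam \<bullet> (G *\<^sub>v eps)"
    by (rule scalar_prod_minus_distrib[OF lamc], insert G e' eps, auto)
  also have "d \<bullet> (- c) = - (c \<bullet> d)" using dc c by (simp add: comm_scalar_prod[of _ p])
  finally have Hd: "d \<bullet> (Hh *\<^sub>v eps) \<ge> - (c \<bullet> d)" using l1 l2 by linarith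
  have Hepsc: "Hh *\<^sub>v eps \<in> carrier_vec p" "Hh *\<^sub>v d \<in> carrier_vec p" using Hh eps dc by auto
  have "e' \<bullet> (Hh *\<^sub>v e') = (eps + d) \<bullet> (Hh *\<^sub>v eps + Hh *\<^sub>v d)"
    unfolding e'd using Hh eps dc by (simp add: mult_add_distrib_mat_vec)
  also have "\<dots> = eps \<bullet> (Hh *\<^sub>v eps) + eps \<bullet> (Hh *\<^sub>v d) + (d \<bullet> (Hh *\<^sub>v eps) + d \<bullet> (Hh *\<^sub>v d))"
    using eps dc Hepsc by (simp add: add_scalar_prod_distrib[of _ p] scalar_prod_add_distrib[of _ p])
  also have "eps \<bullet> (Hh *\<^sub>v d) = d \<bullet> (Hh *\<^sub>v eps)" using Hsym eps dc by blast
  finally have q: "e' \<bullet> (Hh *\<^sub>v e') = eps \<bullet> (Hh *\<^sub>v eps) + 2 * (d \<bullet> (Hh *\<^sub>v eps)) + d \<bullet> (Hh *\<^sub>v d)" by simp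
  have cl: "c \<bullet> e' = c \<bullet> eps + c \<bullet> d" unfolding e'd by (rule scalar_prod_add_distrib[OF c eps dc])
  have "d \<bullet> (Hh *\<^sub>v d) \<ge> 0" using psd dc by blast
  then show "qp_cost Hh c eps \<le> qp_cost Hh c e'" unfolding qp_cost_def q cl using Hd by (simp add: algebra_simps)
qed

lemma Hh_carrier: "H \<in> carrier_mat k k \<Longrightarrow>
  four_block_mat H (0\<^sub>m k 1) (0\<^sub>m 1 k) (0\<^sub>m 1 (1::nat)) \<in> carrier_mat (k+1) (k+1)"
  by auto

lemma Hh_index: assumes "H \<in> carrier_mat k k" "i < k+1" "j < k+1"
  shows "four_block_mat H (0\<^sub>m k 1) (0\<^sub>m 1 k) (0\<^sub>m 1 1) $$ (i,j) = (if i < k \<and> j < k then H $$ (i,j) else (0::real))"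
  using assms by auto

lemma Hh_sym: assumes H: "H \<in> carrier_mat k k" "transpose_mat H = H"
  shows "transpose_mat (four_block_mat H (0\<^sub>m k 1) (0\<^sub>m 1 k) (0\<^sub>m 1 1)) = (four_block_mat H (0\<^sub>m k 1) (0\<^sub>m 1 k) (0\<^sub>m 1 (1::nat)) :: real mat)"
proof (rule eq_matI)
  fix i j assume "i < dim_row (four_block_mat H (0\<^sub>m k 1) (0\<^sub>m 1 k) (0\<^sub>m 1 (1::nat)) :: real mat)"
     "j < dim_col (four_block_mat H (0\<^sub>m k 1) (0\<^sub>m 1 k) (0\<^sub>m 1 (1::nat)) :: real mat)"
  then have ij: "i < k+1" "j < k+1" using H by auto
  have "H $$ (j, i) = H $$ (i,j)" if "i < k" "j < k" 
    using that H(1) arg_cong[OF H(2), of "\<lambda>M. M $$ (i,j)"] by auto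
  then show "transpose_mat (four_block_mat H (0\<^sub>m k 1) (0\<^sub>m 1 k) (0\<^sub>m 1 1)) $$ (i, j) =
         (four_block_mat H (0\<^sub>m k 1) (0\<^sub>m 1 k) (0\<^sub>m 1 1) :: real mat) $$ (i, j)"
    using ij H by (auto simp: Hh_index)
qed (insert H, auto)

lemma Hh_mult: assumes H: "H \<in> carrier_mat k k" and v: "v \<in> carrier_vec (k+1)"
  shows "four_block_mat H (0\<^sub>m k 1) (0\<^sub>m 1 k) (0\<^sub>m 1 1) *\<^sub>v v = 
     vec (k+1) (\<lambda>i. if i < k then (H *\<^sub>v vec k (\<lambda>j. v $ j)) $ i else (0::real))"
proof (rule eq_vecI)
  fix i assume "i < dim_vec (vec (k+1) (\<lambda>i. if i < k then (H *\<^sub>v vec k (\<lambda>j. v $ j)) $ i else (0::real)))"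
  then have i: "i < k+1" by simp
  show "(four_block_mat H (0\<^sub>m k 1) (0\<^sub>m 1 k) (0\<^sub>m 1 1) *\<^sub>v v) $ i =
       vec (k+1) (\<lambda>i. if i < k then (H *\<^sub>v vec k (\<lambda>j. v $ j)) $ i else 0) $ i"
  proof -
    let ?Hh = "four_block_mat H (0\<^sub>m k 1) (0\<^sub>m 1 k) (0\<^sub>m 1 1) :: real mat"
    have "(?Hh *\<^sub>v v) $ i = (\<Sum>j\<in>{0..<Suc k}. ?Hh $$ (i,j) * v $ j)"
      using i H v by (simp add: scalar_prod_def)
    also have "\<dots> = (\<Sum>j\<in>{0..<k}. ?Hh $$ (i,j) * v $ j)"
      using i H by (simp add: sum.atLeast0_lessThan_Suc Hh_index)
    also have "\<dots> = (\<Sum>j\<in>{0..<k}. (if i < k then H $$ (i,j) else 0) * v $ j)"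
      using i H by (intro sum.cong, auto simp: Hh_index)
    also have "\<dots> = vec (k+1) (\<lambda>i. if i < k then (H *\<^sub>v vec k (\<lambda>j. v $ j)) $ i else 0) $ i"
      using i H by (auto simp: scalar_prod_def)
    finally show ?thesis .
  qed
qed (insert H, auto)

lemma Hh_quad: assumes H: "H \<in> carrier_mat k k" and v: "v \<in> carrier_vec (k+1)"
  shows "v \<bullet> (four_block_mat H (0\<^sub>m k 1) (0\<^sub>m 1 k) (0\<^sub>m 1 1) *\<^sub>v v) = 
     vec k (\<lambda>j. v $ j) \<bullet> (H *\<^sub>v vec k (\<lambda>j. (v :: real vec) $ j))"
  unfolding Hh_mult[OF H v] using H v unfolding scalar_prod_def[of v]
  by (simp add: sum.atLeast0_lessThan_Suc scalar_prod_def)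

lemma Hh_last: assumes H: "H \<in> carrier_mat k k" and v: "v \<in> carrier_vec (k+1)"
  shows "(four_block_mat H (0\<^sub>m k 1) (0\<^sub>m 1 k) (0\<^sub>m 1 1) *\<^sub>v v) $ k = (0::real)"
  unfolding Hh_mult[OF H v] by simp

lemma Hh_unit: assumes H: "H \<in> carrier_mat k k"
  shows "four_block_mat H (0\<^sub>m k 1) (0\<^sub>m 1 k) (0\<^sub>m 1 1) *\<^sub>v unit_vec (k+1) k = (0\<^sub>v (k+1) :: real vec)"
  unfolding Hh_mult[OF H unit_vec_carrier] using H by (intro eq_vecI, auto simp: scalar_prod_def)

lemma Hh_psd: assumes H: "H \<in> carrier_mat k k" "posdef_mat H" and v: "v \<in> carrier_vec (k+1)"
  shows "v \<bullet> (four_block_mat H (0\<^sub>m k 1) (0\<^sub>m 1 k) (0\<^sub>m 1 1) *\<^sub>v v) \<ge> (0::real)"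
    and "(\<exists>i<k. v $ i \<noteq> 0) \<Longrightarrow> v \<bullet> (four_block_mat H (0\<^sub>m k 1) (0\<^sub>m 1 k) (0\<^sub>m 1 1) *\<^sub>v v) > (0::real)"
proof -
  define z where "z = vec k (\<lambda>j. v $ j)"
  have pd: "\<And>w. w \<in> carrier_vec k \<Longrightarrow> w \<noteq> 0\<^sub>v k \<Longrightarrow> w \<bullet> (H *\<^sub>v w) > 0"
    using H unfolding posdef_mat_def by auto
  have z: "z \<in> carrier_vec k" unfolding z_def by simp
  show "v \<bullet> (four_block_mat H (0\<^sub>m k 1) (0\<^sub>m 1 k) (0\<^sub>m 1 1) *\<^sub>v v) \<ge> (0::real)"
    unfolding Hh_quad[OF H(1) v] z_def[symmetric]
  proof (cases "z = 0\<^sub>v k")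
    case True then show "z \<bullet> (H *\<^sub>v z) \<ge> 0" using H by simp
  next
    case False then show "z \<bullet> (H *\<^sub>v z) \<ge> 0" using pd[OF z] by force
  qed
  assume "\<exists>i<k. v $ i \<noteq> 0"
  then obtain i where i: "i < k" "v $ i \<noteq> 0" by blast
  have "z \<noteq> 0\<^sub>v k"
  proof
    assume "z = 0\<^sub>v k"
    then have "z $ i = 0" using i by simp
    then show False using i unfolding z_def by simp
  qed
  then show "v \<bullet> (four_block_mat H (0\<^sub>m k 1) (0\<^sub>m 1 k) (0\<^sub>m 1 1) *\<^sub>v v) > (0::real)"
    unfolding Hh_quad[OF H(1) v] z_def[symmetric] using pd[OF z] by blast
qed

lemma sum_split_nat: "(\<Sum>k\<in>{0..<a+b}. f k) = (\<Sum>k\<in>{0..<a}. f k) + (\<Sum>k\<in>{0..<b}. f (k + (a::nat)))"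
proof -
  have "(\<Sum>k\<in>{0..<a+b}. f k) = (\<Sum>k\<in>{0..<a}. f k) + (\<Sum>k\<in>{a..<a+b}. f k)"
    using sum.atLeastLessThan_concat[of 0 a "a+b" f] by simp
  also have "(\<Sum>k\<in>{a..<a+b}. f k) = (\<Sum>k\<in>{0..<b}. f (k + a))"
    using sum.shift_bounds_nat_ivl[of f 0 a b] by (simp add: add.commute)
  finally show ?thesis .
qed

lemma append_cols_index:
  assumes E: "E \<in> carrier_mat p a" and J: "J \<in> carrier_mat p b" and i: "i < p" and j: "j < a + b"
  shows "append_cols E J $$ (i,j) = (if j < a then E $$ (i,j) else J $$ (i, j - a))"
  unfolding append_cols_def using E J i j by auto

lemma append_cols_carrier:
  assumes E: "E \<in> carrier_mat p a" and J: "J \<in> carrier_mat p b"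
  shows "append_cols E J \<in> carrier_mat p (a + b)"
  unfolding append_cols_def using E J by auto

lemma orth_blocks:
  fixes E J :: "real mat"
  assumes E: "E \<in> carrier_mat p a" and J: "J \<in> carrier_mat p (p - a)"
    and orth: "transpose_mat (append_cols E J) * append_cols E J = 1\<^sub>m p"
  shows "a \<le> p" and "transpose_mat E * E = 1\<^sub>m a" and "transpose_mat J * J = 1\<^sub>m (p - a)"
    and "transpose_mat E * J = 0\<^sub>m a (p - a)"
    and "E * transpose_mat E + J * transpose_mat J = 1\<^sub>m p"
proof -
  let ?M = "append_cols E J"
  have M: "?M \<in> carrier_mat p (a + (p - a))" by (rule append_cols_carrier[OF E J])
  have "dim_col (transpose_mat ?M * ?M) = a + (p - a)" using M by simp
  then show ap: "a \<le> p" unfolding orth by simp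
  then have M: "?M \<in> carrier_mat p p" using M by simp
  have Mi: "?M $$ (i,j) = (if j < a then E $$ (i,j) else J $$ (i, j - a))" if "i < p" "j < p" for i j
    using append_cols_index[OF E J that(1)] that ap by simp
  have MtM: "(\<Sum>k\<in>{0..<p}. ?M $$ (k,i) * ?M $$ (k,j)) = (if i = j then 1 else 0)" if "i < p" "j < p" for i j
  proof -
    have "(transpose_mat ?M * ?M) $$ (i,j) = (1\<^sub>m p) $$ (i,j)" unfolding orth ..
    then show ?thesis using that M by (simp add: scalar_prod_def)
  qed
  show "transpose_mat E * E = 1\<^sub>m a"
  proof (rule eq_matI)
    fix i j assume ij: "i < dim_row (1\<^sub>m a)" "j < dim_col (1\<^sub>m a)"
    then show "(transpose_mat E * E) $$ (i,j) = 1\<^sub>m a $$ (i,j)"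
      using MtM[of i j] ap E by (simp add: scalar_prod_def Mi)
  qed (insert E, auto)
  show "transpose_mat J * J = 1\<^sub>m (p - a)"
  proof (rule eq_matI)
    fix i j assume ij: "i < dim_row (1\<^sub>m (p-a))" "j < dim_col (1\<^sub>m (p-a))"
    then show "(transpose_mat J * J) $$ (i,j) = 1\<^sub>m (p-a) $$ (i,j)"
      using MtM[of "i+a" "j+a"] ap J by (simp add: scalar_prod_def Mi)
  qed (insert J, auto)
  show "transpose_mat E * J = 0\<^sub>m a (p - a)"
  proof (rule eq_matI)
    fix i j assume ij: "i < dim_row (0\<^sub>m a (p-a))" "j < dim_col (0\<^sub>m a (p-a))"
    then show "(transpose_mat E * J) $$ (i,j) = (0\<^sub>m a (p-a) :: real mat) $$ (i,j)"
      using MtM[of i "j+a"] ap E J by (simp add: scalar_prod_def Mi)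
  qed (insert E J, auto)
  have MMt: "?M * transpose_mat ?M = 1\<^sub>m p"
    by (rule mat_mult_left_right_inverse[OF _ M orth], insert M, simp)
  show "E * transpose_mat E + J * transpose_mat J = 1\<^sub>m p"
  proof (rule eq_matI)
    fix i j assume ij: "i < dim_row (1\<^sub>m p)" "j < dim_col (1\<^sub>m p)"
    have "(?M * transpose_mat ?M) $$ (i,j) = (1\<^sub>m p) $$ (i,j)" unfolding MMt ..
    then have "(\<Sum>k\<in>{0..<a + (p - a)}. ?M $$ (i,k) * ?M $$ (j,k)) = 1\<^sub>m p $$ (i,j)"
      using ij M ap by (simp add: scalar_prod_def)
    then have "(\<Sum>k\<in>{0..<a}. ?M $$ (i,k) * ?M $$ (j,k)) + (\<Sum>k\<in>{0..<p-a}. ?M $$ (i,k+a) * ?M $$ (j,k+a)) = 1\<^sub>m p $$ (i,j)"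
      unfolding sum_split_nat .
    moreover have "(\<Sum>k\<in>{0..<a}. ?M $$ (i,k) * ?M $$ (j,k)) = (\<Sum>k\<in>{0..<a}. E $$ (i,k) * E $$ (j,k))"
      using ij ap by (intro sum.cong, auto simp: Mi)
    moreover have "(\<Sum>k\<in>{0..<p-a}. ?M $$ (i,k+a) * ?M $$ (j,k+a)) = (\<Sum>k\<in>{0..<p-a}. J $$ (i,k) * J $$ (j,k))"
      using ij ap by (intro sum.cong, auto simp: Mi)
    ultimately show "(E * transpose_mat E + J * transpose_mat J) $$ (i,j) = 1\<^sub>m p $$ (i,j)"
      using ij E J by (simp add: scalar_prod_def)
  qed (insert E J, auto)
qed

lemma qr_blocks:
  fixes E J F GAt :: "real mat"
  assumes E: "E \<in> carrier_mat p a" and J: "J \<in> carrier_mat p (p - a)" and F: "F \<in> carrier_mat a a"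
    and ap: "a \<le> p"
    and QR: "GAt = append_cols E J * (F @\<^sub>r 0\<^sub>m (p - a) a)"
  shows "GAt = E * F"
proof -
  let ?M = "append_cols E J"
  have M: "?M \<in> carrier_mat p (a + (p - a))" by (rule append_cols_carrier[OF E J])
  have R: "F @\<^sub>r 0\<^sub>m (p - a) a \<in> carrier_mat (a + (p - a)) a" using F by auto
  show ?thesis unfolding QR
  proof (rule eq_matI)
    fix i j assume ij: "i < dim_row (E * F)" "j < dim_col (E * F)"
    then have ij: "i < p" "j < a" using E F by auto
    have "(?M * (F @\<^sub>r 0\<^sub>m (p - a) a)) $$ (i,j) = (\<Sum>k\<in>{0..<a + (p - a)}. ?M $$ (i,k) * (F @\<^sub>r 0\<^sub>m (p - a) a) $$ (k,j))"
      using M R ij by (simp add: scalar_prod_def)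
    also have "\<dots> = (\<Sum>k\<in>{0..<a}. ?M $$ (i,k) * (F @\<^sub>r 0\<^sub>m (p - a) a) $$ (k,j)) + 
        (\<Sum>k\<in>{0..<p-a}. ?M $$ (i,k+a) * (F @\<^sub>r 0\<^sub>m (p - a) a) $$ (k+a,j))" unfolding sum_split_nat ..
    also have "\<dots> = (\<Sum>k\<in>{0..<a}. E $$ (i,k) * F $$ (k,j))"
      using ij E J F ap by (auto simp: append_cols_index append_rows_def intro!: sum.neutral sum.cong)
    also have "\<dots> = (E * F) $$ (i,j)" using ij E F by (simp add: scalar_prod_def)
    finally show "(?M * (F @\<^sub>r 0\<^sub>m (p - a) a)) $$ (i,j) = (E * F) $$ (i,j)" .
  qed (insert M E F carrier_matD[OF R], auto)
qed

lemma card_sub_lt: "A \<subseteq> {..<L} \<Longrightarrow> card {i. i < L \<and> i \<in> A} = card A"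
  by (rule arg_cong[where f = card], auto)

lemma row_sub_carrier: assumes "G \<in> carrier_mat L p" "A \<subseteq> {..<L}"
  shows "row_sub G A \<in> carrier_mat (card A) p"
  unfolding row_sub_def using assms card_sub_lt[OF assms(2)] by (auto simp: dim_submatrix carrier_matD)

lemma pick_props: assumes "A \<subseteq> {..<L}" "k < card A"
  shows "pick A k \<in> A" "pick A k < L"
  using pick_in_set_le[OF assms(2)] assms(1) by auto

lemma row_sub_index: assumes G: "G \<in> carrier_mat L p" and A: "A \<subseteq> {..<L}" and k: "k < card A" and j: "j < p"
  shows "row_sub G A $$ (k,j) = G $$ (pick A k, j)"
  unfolding row_sub_def using G A k j card_sub_lt[OF A]
  by (subst submatrix_index, auto simp: pick_UNIV)

lemma row_sub_row: assumes G: "G \<in> carrier_mat L p" and A: "A \<subseteq> {..<L}" and k: "k < card A"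
  shows "row (row_sub G A) k = row G (pick A k)"
  using row_sub_carrier[OF G A] G A k pick_props[OF A k]
  by (intro eq_vecI, auto simp: row_sub_index)

lemma row_sub_mult: assumes G: "G \<in> carrier_mat L p" and A: "A \<subseteq> {..<L}" and k: "k < card A"
  shows "(row_sub G A *\<^sub>v v) $ k = row G (pick A k) \<bullet> v"
  using row_sub_carrier[OF G A] k row_sub_row[OF G A k] by simp

lemma vec_sub_carrier: assumes "W \<in> carrier_vec L" "A \<subseteq> {..<L}"
  shows "vec_sub W A \<in> carrier_vec (card A)"
  unfolding vec_sub_def using assms card_sub_lt[OF assms(2)] by auto

lemma vec_sub_index: assumes "W \<in> carrier_vec L" "A \<subseteq> {..<L}" "k < card A"
  shows "vec_sub W A $ k = W $ pick A k"
  unfolding vec_sub_def using assms card_sub_lt[OF assms(2)] by auto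

lemma pick_surj: assumes "A \<subseteq> {..<L}" "i \<in> A"
  shows "card {a\<in>A. a < i} < card A" "pick A (card {a\<in>A. a < i}) = i"
proof -
  have fin: "finite A" using assms(1) finite_nat_iff_bounded by blast
  show "card {a\<in>A. a < i} < card A" using assms(2) fin by (intro psubset_card_mono, auto)
  show "pick A (card {a\<in>A. a < i}) = i" by (rule pick_card_in_set[OF assms(2)])
qed

definition lam_ext :: "nat \<Rightarrow> nat set \<Rightarrow> real vec \<Rightarrow> real vec" where
  "lam_ext L A la = vec L (\<lambda>i. if i \<in> A then la $ card {a\<in>A. a < i} else 0)"

lemma lam_ext_sub: assumes A: "A \<subseteq> {..<L}" and la: "la \<in> carrier_vec (card A)"
  shows "vec_sub (lam_ext L A la) A = la"
proof (rule eq_vecI)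
  show "dim_vec (vec_sub (lam_ext L A la) A) = dim_vec la"
    using vec_sub_carrier[of "lam_ext L A la" L A] A la unfolding lam_ext_def by auto
  fix k assume "k < dim_vec la"
  then have k: "k < card A" using la by simp
  show "vec_sub (lam_ext L A la) A $ k = la $ k"
    using vec_sub_index[of "lam_ext L A la" L A k] A k pick_props[OF A k] card_pick_le[OF k]
    unfolding lam_ext_def by auto
qed

lemma lam_ext_sub0: assumes A: "A \<subseteq> {..<L}" and I: "I \<subseteq> {..<L}" and dis: "A \<inter> I = {}"
  shows "vec_sub (lam_ext L A la) I = 0\<^sub>v (card I)"
proof (rule eq_vecI)
  show "dim_vec (vec_sub (lam_ext L A la) I) = dim_vec (0\<^sub>v (card I))"
    using vec_sub_carrier[of "lam_ext L A la" L I] I unfolding lam_ext_def by auto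
  fix k assume "k < dim_vec (0\<^sub>v (card I) :: real vec)"
  then have k: "k < card I" by simp
  show "vec_sub (lam_ext L A la) I $ k = 0\<^sub>v (card I) $ k"
    using vec_sub_index[of "lam_ext L A la" L I k] I k pick_props[OF I k] dis
    unfolding lam_ext_def by auto
qed

lemma lam_ext_carrier: "lam_ext L A la \<in> carrier_vec L" unfolding lam_ext_def by simp

lemma lam_ext_transpose: assumes G: "G \<in> carrier_mat L p" and A: "A \<subseteq> {..<L}" and la: "la \<in> carrier_vec (card A)"
  shows "transpose_mat G *\<^sub>v lam_ext L A la = transpose_mat (row_sub G A) *\<^sub>v la"
proof (rule eq_vecI)
  have GA: "row_sub G A \<in> carrier_mat (card A) p" by (rule row_sub_carrier[OF G A])
  show "dim_vec (transpose_mat G *\<^sub>v lam_ext L A la) = dim_vec (transpose_mat (row_sub G A) *\<^sub>v la)"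
    using G GA by simp
  fix j assume "j < dim_vec (transpose_mat (row_sub G A) *\<^sub>v la)"
  then have j: "j < p" using GA by simp
  have fin: "finite A" using A finite_nat_iff_bounded by blast
  have "(transpose_mat G *\<^sub>v lam_ext L A la) $ j = (\<Sum>i\<in>{0..<L}. G $$ (i,j) * lam_ext L A la $ i)"
    using G j by (simp add: scalar_prod_def lam_ext_def)
  also have "\<dots> = (\<Sum>i\<in>A. G $$ (i,j) * la $ card {a\<in>A. a < i})"
  proof -
    have "(\<Sum>i\<in>{0..<L}. G $$ (i,j) * lam_ext L A la $ i) = (\<Sum>i\<in>{0..<L}. if i \<in> A then G $$ (i,j) * la $ card {a\<in>A. a < i} else 0)"
      by (intro sum.cong, auto simp: lam_ext_def)
    also have "\<dots> = (\<Sum>i\<in>{0..<L} \<inter> A. G $$ (i,j) * la $ card {a\<in>A. a < i})"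
      by (simp add: sum.inter_restrict)
    also have "{0..<L} \<inter> A = A" using A by auto
    finally show ?thesis .
  qed
  also have "\<dots> = (\<Sum>k\<in>{0..<card A}. G $$ (pick A k, j) * la $ k)"
    by (rule sum.reindex_bij_witness[where j = "\<lambda>i. card {a\<in>A. a < i}" and i = "pick A"])
      (auto simp: pick_surj[OF A] card_pick_le pick_props[OF A])
  also have "\<dots> = (transpose_mat (row_sub G A) *\<^sub>v la) $ j"
    using GA la j G A by (auto simp: scalar_prod_def row_sub_index intro!: sum.cong)
  finally show "(transpose_mat G *\<^sub>v lam_ext L A la) $ j = (transpose_mat (row_sub G A) *\<^sub>v la) $ j" .
qed

lemma inv_from_det:
  fixes M :: "real mat"
  assumes M: "M \<in> carrier_mat k k" and d: "det M \<noteq> 0"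
  shows "M * the (mat_inverse M) = 1\<^sub>m k" "the (mat_inverse M) * M = 1\<^sub>m k"
    "the (mat_inverse M) \<in> carrier_mat k k" "invertible_mat M"
proof -
  have U: "M \<in> Units (ring_mat TYPE(real) k ())" by (rule det_non_zero_imp_unit[OF M d])
  have "mat_inverse M \<noteq> None" using mat_inverse(1)[OF M, where b = "()"] U by blast
  then obtain B where B: "mat_inverse M = Some B" by auto
  from mat_inverse(2)[OF M B] 
  show "M * the (mat_inverse M) = 1\<^sub>m k" "the (mat_inverse M) * M = 1\<^sub>m k"
    "the (mat_inverse M) \<in> carrier_mat k k" using B by auto
  then show "invertible_mat M" using M unfolding invertible_mat_def inverts_mat_def square_mat.simps
    by (intro conjI exI[of _ "the (mat_inverse M)"], auto)
qed

lemma gamma_active: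
  fixes H G S :: "real mat" and W x0 eps0 :: "real vec"
  assumes H: "H \<in> carrier_mat k k" and G: "G \<in> carrier_mat L (k+1)" and W: "W \<in> carrier_vec L"
    and S: "S \<in> carrier_mat L n" and x0: "x0 \<in> carrier_vec n"
    and opt: "qp_optimizer (four_block_mat H (0\<^sub>m k 1) (0\<^sub>m 1 k) (0\<^sub>m 1 1)) (unit_vec (k+1) k) G W S x0 eps0"
  shows "\<exists>i\<in>active_set G W S x0 eps0. G $$ (i,k) \<noteq> 0"
proof (rule ccontr)
  assume "\<not> ?thesis"
  then have z: "\<And>i. i \<in> active_set G W S x0 eps0 \<Longrightarrow> G $$ (i,k) = 0" by blast
  let ?Hh = "four_block_mat H (0\<^sub>m k 1) (0\<^sub>m 1 k) (0\<^sub>m 1 1) :: real mat"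
  let ?e = "unit_vec (k+1) k :: real vec"
  define s where "s i = row G i \<bullet> eps0 - W $ i - row S i \<bullet> x0" for i
  have feas: "qp_feasible G W S x0 eps0" using opt unfolding qp_optimizer_def by auto
  then have eps0: "eps0 \<in> carrier_vec (k+1)" using G unfolding qp_feasible_def by auto
  have sle: "s i \<le> 0" if "i < L" for i
  proof -
    have "(G *\<^sub>v eps0) $ i \<le> (W + S *\<^sub>v x0) $ i" using feas that G W S x0
      unfolding qp_feasible_def less_eq_vec_def by auto
    then show ?thesis using that G W S x0 unfolding s_def by simp
  qed
  define I where "I = {i. i < L \<and> s i < 0}"
  have finI: "finite I" unfolding I_def by auto
  define del where "del = Min (insert 1 ((\<lambda>i. - s i / (\<bar>G $$ (i,k)\<bar> + 1)) ` I))"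
  have delpos: "del > 0" unfolding del_def using finI
    by (subst Min_gr_iff, auto simp: I_def divide_less_0_iff add_nonneg_pos)
  have delle: "del \<le> - s i / (\<bar>G $$ (i,k)\<bar> + 1)" if "i \<in> I" for i
    unfolding del_def using finI that by (intro Min_le, auto)
  define e' where "e' = eps0 - del \<cdot>\<^sub>v ?e"
  have e': "e' \<in> carrier_vec (k+1)" unfolding e'_def using eps0 by simp
  have rowe: "row G i \<bullet> e' = row G i \<bullet> eps0 - del * G $$ (i,k)" if "i < L" for i
  proof -
    have "row G i \<bullet> e' = row G i \<bullet> eps0 - row G i \<bullet> (del \<cdot>\<^sub>v ?e)"
      unfolding e'_def by (rule scalar_prod_minus_distrib[of _ "k+1"], insert G eps0 that, auto)
    then show ?thesis using G that by simp
  qed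
  have fe': "qp_feasible G W S x0 e'"
    unfolding qp_feasible_def less_eq_vec_def
  proof (intro conjI allI impI)
    show "e' \<in> carrier_vec (dim_col G)" using e' G by simp
    show "dim_vec (G *\<^sub>v e') = dim_vec (W + S *\<^sub>v x0)" using G W S by simp
    fix i assume "i < dim_vec (W + S *\<^sub>v x0)"
    then have i: "i < L" using W S by simp
    show "(G *\<^sub>v e') $ i \<le> (W + S *\<^sub>v x0) $ i"
    proof (cases "s i < 0")
      case True
      then have iI: "i \<in> I" unfolding I_def using i by simp
      have pos: "\<bar>G $$ (i,k)\<bar> + 1 > 0" by (simp add: add_nonneg_pos)
      have "del * (\<bar>G $$ (i,k)\<bar> + 1) \<le> - s i / (\<bar>G $$ (i,k)\<bar> + 1) * (\<bar>G $$ (i,k)\<bar> + 1)"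
        using delle[OF iI] pos by (intro mult_right_mono, auto)
      then have "del * (\<bar>G $$ (i,k)\<bar> + 1) \<le> - s i" using pos by simp
      moreover have "del * (- G $$ (i,k)) \<le> del * \<bar>G $$ (i,k)\<bar>" using delpos
        by (intro mult_left_mono, auto)
      ultimately have "s i - del * G $$ (i,k) \<le> 0" using delpos by (simp add: algebra_simps)
      then show ?thesis using rowe[OF i] i G W S x0 unfolding s_def by simp
    next
      case False
      then have "s i = 0" using sle[OF i] by simp
      then have "i \<in> active_set G W S x0 eps0" unfolding active_set_def s_def using i G by simp
      then have "G $$ (i,k) = 0" by (rule z)
      then show ?thesis using rowe[OF i] i G W S x0 sle[OF i] unfolding s_def by simp
    qed
  qed
  have Hhe: "?Hh *\<^sub>v e' = ?Hh *\<^sub>v eps0"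
  proof -
    have "?Hh *\<^sub>v e' = ?Hh *\<^sub>v eps0 - ?Hh *\<^sub>v (del \<cdot>\<^sub>v ?e)"
      unfolding e'_def by (rule mult_minus_distrib_mat_vec[of _ "k+1" "k+1"], insert H eps0, auto)
    also have "?Hh *\<^sub>v (del \<cdot>\<^sub>v ?e) = del \<cdot>\<^sub>v (?Hh *\<^sub>v ?e)"
      by (rule mult_mat_vec[of _ "k+1" "k+1"], insert H, auto)
    also have "?Hh *\<^sub>v ?e = 0\<^sub>v (k+1)" by (rule Hh_unit[OF H])
    finally show ?thesis using H eps0 by (intro eq_vecI, auto)
  qed
  have Hhc: "?Hh *\<^sub>v eps0 \<in> carrier_vec (k+1)"
    using mult_mat_vec_carrier[OF Hh_carrier[OF H] eps0] .
  have q: "e' \<bullet> (?Hh *\<^sub>v e') = eps0 \<bullet> (?Hh *\<^sub>v eps0)"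
  proof -
    have "e' \<bullet> (?Hh *\<^sub>v eps0) = eps0 \<bullet> (?Hh *\<^sub>v eps0) - (del \<cdot>\<^sub>v ?e) \<bullet> (?Hh *\<^sub>v eps0)"
      unfolding e'_def by (rule minus_scalar_prod_distrib[of _ "k+1"], insert Hhc eps0, auto)
    also have "(del \<cdot>\<^sub>v ?e) \<bullet> (?Hh *\<^sub>v eps0) = del * (?Hh *\<^sub>v eps0) $ k"
      using smult_scalar_prod_distrib[OF unit_vec_carrier[of "k+1" k] Hhc, of del]
        scalar_prod_left_unit[OF Hhc, of k] by simp
    also have "(?Hh *\<^sub>v eps0) $ k = 0" by (rule Hh_last[OF H eps0])
    finally show ?thesis unfolding Hhe by simp
  qed
  have cl: "?e \<bullet> e' = ?e \<bullet> eps0 - del"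
    unfolding e'_def using eps0 by (subst scalar_prod_minus_distrib[of _ "k+1"], auto)
  have "qp_cost ?Hh ?e eps0 \<le> qp_cost ?Hh ?e e'" using opt fe' unfolding qp_optimizer_def by blast
  then show False unfolding qp_cost_def q cl using delpos by simp
qed

lemma main:
  fixes k0 l r n p :: nat
    and H G S :: "real mat" and W :: "real vec"
    and x0 :: "real vec"
    and E J F :: "real mat" and Hh :: "real mat" and c :: "real vec"
  assumes p_def: "p = k0 + 1"
    and Hh_def: "Hh = four_block_mat H (0\<^sub>m k0 1) (0\<^sub>m 1 k0) (0\<^sub>m 1 1)"
    and c_def: "c = unit_vec (k0 + 1) k0"
  assumes H: "H \<in> carrier_mat k0 k0" "posdef_mat H"
    and G: "G \<in> carrier_mat (l + r) p"
    and W: "W \<in> carrier_vec (l + r)"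
    and S: "S \<in> carrier_mat (l + r) n"
    and unique: "\<forall>x \<in> feasible_states G W S. \<exists>!eps. qp_optimizer Hh c G W S x eps"
    and x0: "x0 \<in> feasible_states G W S"
    and A_def: "A = active_set G W S x0 (eps_star Hh c G W S x0)"
    and I_def: "I = inactive_set G W S x0 (eps_star Hh c G W S x0)"
    and rank: "vec_space.rank (card A) (row_sub G A) = card A"
    and E: "E \<in> carrier_mat p (card A)"
    and J: "J \<in> carrier_mat p (p - card A)"
    and F: "F \<in> carrier_mat (card A) (card A)"
    and EJ_orth: "transpose_mat (append_cols E J) * append_cols E J = 1\<^sub>m p"
    and QR: "transpose_mat (row_sub G A) = append_cols E J * (F @\<^sub>r 0\<^sub>m (p - card A) (card A))"
    and GA_def: "GA = row_sub G A" and SA_def: "SA = row_sub S A" and WA_def: "WA = vec_sub W A"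
    and GI_def: "GI = row_sub G I" and SI_def: "SI = row_sub S I" and WI_def: "WI = vec_sub W I"
    and Psi_def: "Psi = the (mat_inverse (transpose_mat J * Hh * J))"
    and Theta_def: "Theta = the (mat_inverse (GA * E))"
    and Keps_def: "Keps = E * Theta * SA - J * Psi * transpose_mat J * Hh * E * Theta * SA"
    and beps_def: "beps = (E - J * Psi * transpose_mat J * Hh * E) * Theta *\<^sub>v WA - J * Psi * transpose_mat J *\<^sub>v c"
    and Klam_def: "Klam = - (transpose_mat Theta * transpose_mat E * (Hh * Keps))"
    and blam_def: "blam = - (transpose_mat Theta * transpose_mat E *\<^sub>v (Hh *\<^sub>v beps + c))"
    and T_def: "T = (GI * Keps - SI) @\<^sub>r (- Klam)"
    and d_def: "d = (WI - GI *\<^sub>v beps) @\<^sub>v blam"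
  shows "invertible_mat (transpose_mat J * Hh * J) \<and> invertible_mat (GA * E) \<and>
        (\<forall>x \<in> carrier_vec n. T *\<^sub>v x \<le> d \<longrightarrow>
            x \<in> feasible_states G W S \<and>
            eps_star Hh c G W S x = Keps *\<^sub>v x + beps \<and>
            (\<exists>lam. lagrange_multipliers Hh c G W S x (eps_star Hh c G W S x) lam \<and>
                   vec_sub lam A = Klam *\<^sub>v x + blam \<and>
                   vec_sub lam I = 0\<^sub>v (card I)))"
proof -
  define L where "L = l + r"
  define a where "a = card A"
  define q where "q = p - a"
  define eps0 where "eps0 = eps_star Hh c G W S x0"
  have G: "G \<in> carrier_mat L p" and W: "W \<in> carrier_vec L" and S: "S \<in> carrier_mat L n"
    using G W S unfolding L_def by auto
  have E: "E \<in> carrier_mat p a" and J: "J \<in> carrier_mat p q" and F: "F \<in> carrier_mat a a"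
    using E J F unfolding a_def q_def by auto
  have Hh: "Hh \<in> carrier_mat p p" unfolding Hh_def p_def using H(1) by auto
  have c: "c \<in> carrier_vec p" unfolding c_def p_def by simp
  have Hsym: "transpose_mat H = H" using H(2) unfolding posdef_mat_def by auto
  have Hhsym: "transpose_mat Hh = Hh" unfolding Hh_def by (rule Hh_sym[OF H(1) Hsym])
  have psd: "\<forall>v\<in>carrier_vec p. v \<bullet> (Hh *\<^sub>v v) \<ge> 0" 
    unfolding Hh_def p_def using Hh_psd(1)[OF H] by blast
  have x0c: "x0 \<in> carrier_vec n" using x0 S unfolding feasible_states_def by auto
  have opt0: "qp_optimizer Hh c G W S x0 eps0"
  proof -
    have "\<exists>!eps. qp_optimizer Hh c G W S x0 eps" using unique x0 by blast
    then show ?thesis unfolding eps0_def eps_star_def by (rule theI')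
  qed
  have AL: "A \<subseteq> {..<L}" and IL: "I \<subseteq> {..<L}" and AI: "A \<inter> I = {}"
    unfolding A_def I_def active_set_def inactive_set_def using G by auto
  have feas0: "qp_feasible G W S x0 eps0" using opt0 unfolding qp_optimizer_def by auto
  have AuI: "i \<in> A \<or> i \<in> I" if "i < L" for i
  proof -
    have "(G *\<^sub>v eps0) $ i \<le> (W + S *\<^sub>v x0) $ i" using feas0 that G W S x0c
      unfolding qp_feasible_def less_eq_vec_def by auto
    then show ?thesis using that G W S x0c unfolding A_def I_def active_set_def inactive_set_def eps0_def[symmetric]
      by auto
  qed
  note ob = orth_blocks[OF E[unfolded q_def] J[unfolded q_def] EJ_orth]
  have ap: "a \<le> p" using ob(1) .
  have EtE: "transpose_mat E * E = 1\<^sub>m a" using ob(2) .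
  have EtJ: "transpose_mat E * J = 0\<^sub>m a q" using ob(4) unfolding q_def .
  have EEJJ: "E * transpose_mat E + J * transpose_mat J = 1\<^sub>m p" using ob(5) .
  have GA: "GA \<in> carrier_mat a p" unfolding GA_def a_def by (rule row_sub_carrier[OF G AL])
  have GAt: "transpose_mat GA = E * F"
    by (rule qr_blocks[OF E J[unfolded q_def] F ap], unfold GA_def a_def, rule QR)
  have GAFE: "GA = transpose_mat F * transpose_mat E"
  proof -
    have "GA = transpose_mat (transpose_mat GA)" by simp
    also have "\<dots> = transpose_mat F * transpose_mat E" unfolding GAt by (rule transpose_mult[OF E F])
    finally show ?thesis .
  qed
  have Ft: "transpose_mat F \<in> carrier_mat a a" and Et: "transpose_mat E \<in> carrier_mat a p"
    and Jt: "transpose_mat J \<in> carrier_mat q p" using F E J by auto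
  have GAE: "GA * E = transpose_mat F"
    unfolding GAFE using Ft Et E EtE by (simp add: assoc_mult_mat[OF Ft Et E])
  have GAJ: "GA * J = 0\<^sub>m a q"
    unfolding GAFE using Ft Et J EtJ by (simp add: assoc_mult_mat[OF Ft Et J])
  have rk: "vec_space.rank a GA = a" using rank unfolding GA_def a_def .
  have "vec_space.rank a GA \<le> vec_space.rank a (transpose_mat F)"
    unfolding GAFE by (rule vec_space.rank_mult_le[OF Ft Et])
  moreover have "vec_space.rank a (transpose_mat F) \<le> a" by (rule vec_space.rank_le_nc[OF Ft])
  ultimately have "vec_space.rank a (transpose_mat F) = a" using rk by simp
  then have detF: "det (transpose_mat F) \<noteq> 0" using vec_space.det_rank_iff[OF Ft] by simp
  note invF = inv_from_det[OF Ft detF]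
  have Theta: "Theta \<in> carrier_mat a a" unfolding Theta_def GAE using invF(3) .
  have GAETh: "GA * E * Theta = 1\<^sub>m a" unfolding Theta_def GAE using invF(1) .
  have FTh: "F * transpose_mat Theta = 1\<^sub>m a"
  proof -
    have "F * transpose_mat Theta = transpose_mat (Theta * transpose_mat F)"
      using transpose_mult[OF Theta Ft] by simp
    also have "Theta * transpose_mat F = 1\<^sub>m a" unfolding Theta_def GAE using invF(2) .
    finally show ?thesis by simp
  qed
  have invGAE: "invertible_mat (GA * E)" unfolding GAE using invF(4) .

  have G': "G \<in> carrier_mat L (k0+1)" using G p_def by simp
  have A0: "A = active_set G W S x0 eps0" unfolding A_def eps0_def ..
  obtain i0 where i0A: "i0 \<in> A" and gi0: "G $$ (i0,k0) \<noteq> 0"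
    using gamma_active[OF H(1) G' W S x0c opt0[unfolded Hh_def c_def]] unfolding A0 by blast
  define M2 where "M2 = transpose_mat J * Hh * J"
  have M2: "M2 \<in> carrier_mat q q" unfolding M2_def using J Hh by auto
  have dims: "dim_row E = p" "dim_col E = a" "dim_row J = p" "dim_col J = q" "dim_row Hh = p" "dim_col Hh = p"
    "dim_row GA = a" "dim_col GA = p" "dim_row Theta = a" "dim_col Theta = a" "dim_row F = a" "dim_col F = a"
    using E J Hh GA Theta F by auto
  have detM2: "det M2 \<noteq> 0"
  proof
    assume "det M2 = 0"
    then obtain v where v: "v \<in> carrier_vec q" "v \<noteq> 0\<^sub>v q" "M2 *\<^sub>v v = 0\<^sub>v q"
      using det_0_iff_vec_prod_zero_field[OF M2] by blast
    define w where "w = J *\<^sub>v v"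
    have wc: "w \<in> carrier_vec p" unfolding w_def using J v by simp
    have Hw: "Hh *\<^sub>v w \<in> carrier_vec p" using Hh wc by simp
    have "M2 *\<^sub>v v = transpose_mat J *\<^sub>v (Hh *\<^sub>v w)"
      unfolding M2_def w_def using v by (simp add: mv_simps dims)
    then have e0: "transpose_mat J *\<^sub>v (Hh *\<^sub>v w) = 0\<^sub>v q" using v(3) by simp
    have "0 = v \<bullet> (transpose_mat J *\<^sub>v (Hh *\<^sub>v w))" unfolding e0 using v(1) by simp
    also have "\<dots> = (transpose_mat J *\<^sub>v (Hh *\<^sub>v w)) \<bullet> v"
      using v Hw J by (simp add: comm_scalar_prod[of _ q])
    also have "\<dots> = (Hh *\<^sub>v w) \<bullet> w" unfolding w_def by (rule transpose_vec_mult_scalar[OF J v(1) Hw[unfolded w_def]])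
    also have "\<dots> = w \<bullet> (Hh *\<^sub>v w)" using Hw wc by (simp add: comm_scalar_prod[of _ p])
    finally have q0: "w \<bullet> (Hh *\<^sub>v w) = 0" by simp
    have wz: "w $ i = 0" if "i < k0" for i
    proof (rule ccontr)
      assume "w $ i \<noteq> 0"
      then have "w \<bullet> (Hh *\<^sub>v w) > 0" unfolding Hh_def
        using Hh_psd(2)[OF H wc[unfolded p_def]] that by blast
      then show False using q0 by simp
    qed
    have GAw: "GA *\<^sub>v w = 0\<^sub>v a"
    proof -
      have "GA *\<^sub>v w = (GA * J) *\<^sub>v v" unfolding w_def using v by (simp add: mv_simps dims)
      then show ?thesis unfolding GAJ using v by (intro eq_vecI, auto simp: scalar_prod_def)
    qed
    have kk: "card {x\<in>A. x < i0} < a" "pick A (card {x\<in>A. x < i0}) = i0"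
      using pick_surj[OF AL i0A] unfolding a_def by auto
    have "row G i0 \<bullet> w = 0"
      using arg_cong[OF GAw, of "\<lambda>u. u $ card {x\<in>A. x < i0}"] row_sub_mult[OF G AL, of "card {x\<in>A. x < i0}" w] kk
      unfolding GA_def a_def by simp
    moreover have "row G i0 \<bullet> w = G $$ (i0, k0) * w $ k0"
    proof -
      have i0L: "i0 < L" using i0A AL by auto
      have "row G i0 \<bullet> w = (\<Sum>j\<in>{0..<Suc k0}. G $$ (i0,j) * w $ j)"
        using G wc i0L p_def by (simp add: scalar_prod_def)
      also have "\<dots> = G $$ (i0, k0) * w $ k0"
        using wz by (simp add: sum.atLeast0_lessThan_Suc)
      finally show ?thesis .
    qed
    ultimately have "w $ k0 = 0" using gi0 by simp
    then have w0: "w = 0\<^sub>v p" using wc wz p_def by (intro eq_vecI, auto simp: less_Suc_eq)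
    have "transpose_mat J *\<^sub>v w = (transpose_mat J * J) *\<^sub>v v" unfolding w_def using v by (simp add: mv_simps dims)
    also have "\<dots> = v" unfolding ob(3)[folded q_def] using v by simp
    finally have "v = transpose_mat J *\<^sub>v w" by simp
    also have "transpose_mat J *\<^sub>v w = 0\<^sub>v q" unfolding w0 using J by (intro eq_vecI, auto simp: scalar_prod_def)
    finally have "v = 0\<^sub>v q" .
    then show False using v by simp
  qed
  note invM2 = inv_from_det[OF M2 detM2]
  have Psi: "Psi \<in> carrier_mat q q" unfolding Psi_def M2_def[symmetric] using invM2(3) .
  have PsiEq: "transpose_mat J * Hh * J * Psi = 1\<^sub>m q" unfolding Psi_def M2_def[symmetric] using invM2(1) .
  have invM2': "invertible_mat (transpose_mat J * Hh * J)" using invM2(4) unfolding M2_def .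
  have SA: "SA \<in> carrier_mat a n" unfolding SA_def a_def by (rule row_sub_carrier[OF S AL])
  have WA: "WA \<in> carrier_vec a" unfolding WA_def a_def by (rule vec_sub_carrier[OF W AL])
  have GI: "GI \<in> carrier_mat (card I) p" unfolding GI_def by (rule row_sub_carrier[OF G IL])
  have SI: "SI \<in> carrier_mat (card I) n" unfolding SI_def by (rule row_sub_carrier[OF S IL])
  have WI: "WI \<in> carrier_vec (card I)" unfolding WI_def by (rule vec_sub_carrier[OF W IL])
  have dims2: "dim_row SA = a" "dim_col SA = n" "dim_row Psi = q" "dim_col Psi = q" "dim_vec WA = a" "dim_vec c = p"
    using SA Psi WA c by auto
  have Keps: "Keps \<in> carrier_mat p n" unfolding Keps_def by (rule carrier_matI, simp_all add: dims dims2)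
  have beps: "beps \<in> carrier_vec p" unfolding beps_def by (rule carrier_vecI, simp add: dims dims2)
  have Klam: "Klam \<in> carrier_mat a n" unfolding Klam_def Keps_def by (rule carrier_matI, simp_all add: dims dims2)
  have blam: "blam \<in> carrier_vec a" unfolding blam_def by (rule carrier_vecI, simp add: dims dims2)
  note kkt = kkt_alg[OF E J Hh GA Theta Psi F SA WA _ c GAETh GAJ PsiEq EEJJ GAt FTh Keps_def beps_def Klam_def blam_def]
  have main: "x \<in> feasible_states G W S \<and>
            eps_star Hh c G W S x = Keps *\<^sub>v x + beps \<and>
            (\<exists>lam. lagrange_multipliers Hh c G W S x (eps_star Hh c G W S x) lam \<and>
                   vec_sub lam A = Klam *\<^sub>v x + blam \<and>
                   vec_sub lam I = 0\<^sub>v (card I))" if x: "x \<in> carrier_vec n" and Txd: "T *\<^sub>v x \<le> d" for x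
  proof -
    define eps where "eps = Keps *\<^sub>v x + beps"
    define la where "la = Klam *\<^sub>v x + blam"
    have epsc: "eps \<in> carrier_vec p" unfolding eps_def using Keps beps x by simp
    have lac: "la \<in> carrier_vec a" unfolding la_def using Klam blam x by simp
    have T1: "GI * Keps - SI \<in> carrier_mat (card I) n" using GI Keps SI by auto
    have T2: "- Klam \<in> carrier_mat a n" using Klam by auto
    have d1: "WI - GI *\<^sub>v beps \<in> carrier_vec (card I)" using WI GI beps by auto
    have "(GI * Keps - SI) *\<^sub>v x \<le> WI - GI *\<^sub>v beps \<and> (- Klam) *\<^sub>v x \<le> blam"
      using Txd unfolding T_def d_def by (subst (asm) append_rows_le[OF T1 T2 d1 x])
    then have le1: "(GI * Keps - SI) *\<^sub>v x \<le> WI - GI *\<^sub>v beps" and le2: "(- Klam) *\<^sub>v x \<le> blam" by auto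
    have ineqI: "row G (pick I k) \<bullet> eps \<le> W $ pick I k + row S (pick I k) \<bullet> x" if k: "k < card I" for k
    proof -
      have "((GI * Keps - SI) *\<^sub>v x) $ k \<le> (WI - GI *\<^sub>v beps) $ k"
      proof -
        have "\<forall>i<dim_vec (WI - GI *\<^sub>v beps). ((GI * Keps - SI) *\<^sub>v x) $ i \<le> (WI - GI *\<^sub>v beps) $ i"
          using le1 unfolding less_eq_vec_def by blast
        moreover have "k < dim_vec (WI - GI *\<^sub>v beps)" using d1 k by (simp only: carrier_vecD)
        ultimately show ?thesis by blast
      qed
      moreover have "(GI * Keps - SI) *\<^sub>v x = GI *\<^sub>v (Keps *\<^sub>v x) - SI *\<^sub>v x"
        using GI Keps SI x by (simp add: mv_simps carrier_matD carrier_vecD)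
      ultimately have "(GI *\<^sub>v (Keps *\<^sub>v x)) $ k - (SI *\<^sub>v x) $ k \<le> WI $ k - (GI *\<^sub>v beps) $ k"
        using k GI SI WI x Keps beps by simp
      then have "row G (pick I k) \<bullet> (Keps *\<^sub>v x) - row S (pick I k) \<bullet> x \<le> W $ pick I k - row G (pick I k) \<bullet> beps"
        unfolding GI_def SI_def WI_def using row_sub_mult[OF G IL k] row_sub_mult[OF S IL k] vec_sub_index[OF W IL k]
        by simp
      moreover have "row G (pick I k) \<bullet> eps = row G (pick I k) \<bullet> (Keps *\<^sub>v x) + row G (pick I k) \<bullet> beps"
        unfolding eps_def by (rule scalar_prod_add_distrib[of _ p], insert G Keps beps x pick_props[OF IL k], auto)
      ultimately show ?thesis by simp
    qed
    have la0: "la $ k \<ge> 0" if k: "k < a" for k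
    proof -
      have "((- Klam) *\<^sub>v x) $ k \<le> blam $ k"
      proof -
        have "\<forall>i<dim_vec blam. ((- Klam) *\<^sub>v x) $ i \<le> blam $ i"
          using le2 unfolding less_eq_vec_def by blast
        moreover have "k < dim_vec blam" using blam k by (simp only: carrier_vecD)
        ultimately show ?thesis by blast
      qed
      moreover have "(- Klam) *\<^sub>v x = - (Klam *\<^sub>v x)" using Klam x by (simp add: mv_simps carrier_matD carrier_vecD)
      ultimately show ?thesis unfolding la_def using k Klam x blam by simp
    qed
    have eqA: "row G (pick A k) \<bullet> eps = W $ pick A k + row S (pick A k) \<bullet> x" if k: "k < a" for k
    proof -
      have "(GA *\<^sub>v eps) $ k = (SA *\<^sub>v x + WA) $ k" unfolding eps_def kkt(1)[OF x] ..
      then show ?thesis using k SA WA x unfolding GA_def SA_def WA_def a_def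
        using row_sub_mult[OF G AL, of k] row_sub_mult[OF S AL, of k] vec_sub_index[OF W AL, of k]
        unfolding a_def by simp
    qed
    define lam where "lam = lam_ext L A la"
    have lamc: "lam \<in> carrier_vec L" unfolding lam_def by (rule lam_ext_carrier)
    have LM: "lagrange_multipliers Hh c G W S x eps lam"
      unfolding lagrange_multipliers_def
    proof (intro conjI allI impI)
      show "lam \<in> carrier_vec (dim_row G)" using lamc G by simp
      show "lam \<ge> 0\<^sub>v (dim_row G)" unfolding less_eq_vec_def using G lamc
        using la0 pick_surj[OF AL] unfolding lam_def lam_ext_def a_def by auto
      have "transpose_mat G *\<^sub>v lam = transpose_mat GA *\<^sub>v la"
        unfolding lam_def GA_def by (rule lam_ext_transpose[OF G AL lac[unfolded a_def]])
      then show "Hh *\<^sub>v eps + c + transpose_mat G *\<^sub>v lam = 0\<^sub>v (dim_col G)"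
        using kkt(2)[OF x] G unfolding eps_def la_def by simp
      fix i assume i: "i < dim_row G"
      then have iL: "i < L" using G by simp
      show "lam $ i * (row G i \<bullet> eps - W $ i - row S i \<bullet> x) = 0"
      proof (cases "i \<in> A")
        case True
        then show ?thesis using eqA[of "card {x\<in>A. x < i}"] pick_surj[OF AL True] unfolding a_def by simp
      next
        case False
        then show ?thesis unfolding lam_def lam_ext_def using iL by simp
      qed
    qed
    have FE: "qp_feasible G W S x eps"
      unfolding qp_feasible_def less_eq_vec_def
    proof (intro conjI allI impI)
      show "eps \<in> carrier_vec (dim_col G)" using epsc G by simp
      show "dim_vec (G *\<^sub>v eps) = dim_vec (W + S *\<^sub>v x)" using G W S by simp
      fix i assume "i < dim_vec (W + S *\<^sub>v x)"
      then have iL: "i < L" using W S by simp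
      show "(G *\<^sub>v eps) $ i \<le> (W + S *\<^sub>v x) $ i"
      proof (cases "i \<in> A")
        case True
        then show ?thesis using eqA[of "card {x\<in>A. x < i}"] pick_surj[OF AL True] iL G W S x
          unfolding a_def by simp
      next
        case False
        then have "i \<in> I" using AuI[OF iL] by simp
        then show ?thesis using ineqI[of "card {x\<in>I. x < i}"] pick_surj[OF IL] iL G W S x by simp
      qed
    qed
    have OPT: "qp_optimizer Hh c G W S x eps" by (rule kkt_opt[OF Hh G c W S x Hhsym psd FE LM])
    have xf: "x \<in> feasible_states G W S" unfolding feasible_states_def using x S FE by auto
    have ES: "eps_star Hh c G W S x = eps"
    proof -
      have "\<exists>!eps. qp_optimizer Hh c G W S x eps" using unique xf by blast
      then show ?thesis unfolding eps_star_def using OPT by (rule the1_equality)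
    qed
    show ?thesis
      unfolding ES eps_def[symmetric] la_def[symmetric]
      using xf LM lam_ext_sub[OF AL lac[unfolded a_def]] lam_ext_sub0[OF AL IL AI] unfolding lam_def by blast
  qed
  show ?thesis using invM2' invGAE main by blast
qed

theorem lemma1:
  fixes m N l r n :: nat
    and H G S :: "real mat" and W :: "real vec"
    and x0 :: "real vec"
    and E J F :: "real mat"
  defines "p \<equiv> m * N + 1"
    and "Hh \<equiv> four_block_mat H (0\<^sub>m (m * N) 1) (0\<^sub>m 1 (m * N)) (0\<^sub>m 1 1)"
    and "c \<equiv> unit_vec (m * N + 1) (m * N)"
  assumes H: "H \<in> carrier_mat (m * N) (m * N)" "posdef_mat H"
    and G: "G \<in> carrier_mat (l + r) p"
    and W: "W \<in> carrier_vec (l + r)"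
    and S: "S \<in> carrier_mat (l + r) n"
    and gc_zero: "\<forall>i. l \<le> i \<and> i < l + r \<longrightarrow> G $$ (i, m * N) = 0"
    and unique: "\<forall>x \<in> feasible_states G W S. \<exists>!eps. qp_optimizer Hh c G W S x eps"
    and x0: "x0 \<in> feasible_states G W S"
    and rank: "vec_space.rank (card (active_set G W S x0 (eps_star Hh c G W S x0)))
                 (row_sub G (active_set G W S x0 (eps_star Hh c G W S x0)))
               = card (active_set G W S x0 (eps_star Hh c G W S x0))"
    and E: "E \<in> carrier_mat p (card (active_set G W S x0 (eps_star Hh c G W S x0)))"
    and J: "J \<in> carrier_mat p (p - card (active_set G W S x0 (eps_star Hh c G W S x0)))"
    and F: "F \<in> carrier_mat (card (active_set G W S x0 (eps_star Hh c G W S x0)))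
                             (card (active_set G W S x0 (eps_star Hh c G W S x0)))"
    and F_upper: "upper_triangular F"
    and EJ_orth: "transpose_mat (append_cols E J) * append_cols E J = 1\<^sub>m p"
    and QR: "transpose_mat (row_sub G (active_set G W S x0 (eps_star Hh c G W S x0)))
             = append_cols E J * (F @\<^sub>r 0\<^sub>m (p - card (active_set G W S x0 (eps_star Hh c G W S x0)))
                                           (card (active_set G W S x0 (eps_star Hh c G W S x0))))"
  shows
    "let A = active_set G W S x0 (eps_star Hh c G W S x0);
         I = inactive_set G W S x0 (eps_star Hh c G W S x0);
         GA = row_sub G A; SA = row_sub S A; WA = vec_sub W A;
         GI = row_sub G I; SI = row_sub S I; WI = vec_sub W I;
         Psi = the (mat_inverse (transpose_mat J * Hh * J));
         Theta = the (mat_inverse (GA * E));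
         Keps = E * Theta * SA - J * Psi * transpose_mat J * Hh * E * Theta * SA;
         beps = (E - J * Psi * transpose_mat J * Hh * E) * Theta *\<^sub>v WA - J * Psi * transpose_mat J *\<^sub>v c;
         Klam = - (transpose_mat Theta * transpose_mat E * (Hh * Keps));
         blam = - (transpose_mat Theta * transpose_mat E *\<^sub>v (Hh *\<^sub>v beps + c));
         T = (GI * Keps - SI) @\<^sub>r (- Klam);
         d = (WI - GI *\<^sub>v beps) @\<^sub>v blam
     in invertible_mat (transpose_mat J * Hh * J) \<and> invertible_mat (GA * E) \<and>
        (\<forall>x \<in> carrier_vec n. T *\<^sub>v x \<le> d \<longrightarrow>
            x \<in> feasible_states G W S \<and>
            eps_star Hh c G W S x = Keps *\<^sub>v x + beps \<and>
            (\<exists>lam. lagrange_multipliers Hh c G W S x (eps_star Hh c G W S x) lam \<and>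
                   vec_sub lam A = Klam *\<^sub>v x + blam \<and>
                   vec_sub lam I = 0\<^sub>v (card I)))"
    unfolding Let_def
  by (rule main[OF p_def[THEN meta_eq_to_obj_eq] Hh_def[THEN meta_eq_to_obj_eq]
        c_def[THEN meta_eq_to_obj_eq] H G W S unique x0 refl refl rank E J F EJ_orth QR]) (rule refl)+

end
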